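(* Let $X$ be a spectral space whose specialization order is total, and let $Y\subseteq X$. Then: (1) $\mathrm{Cl}^\mathrm{cons}(Y)=Y_\infty\cup Y_{(\infty)}$; (2) $Y$ is closed in the constructible topology if and only if the supremum and the infimum of every nonempty subset of $Y$ belong to $Y$.
   Context: A spectral space is a topological space homeomorphic to the prime spectrum of a commutative ring with the Zariski topology. The specialization order is $x\leq y$ iff $y\in\mathrm{Cl}(\{x\})$; suprema and infima refer to it. The constructible topology is the coarsest topology in which all open quasi-compact subsets of $X$ are clopen; $\mathrm{Cl}^\mathrm{cons}$ is closure in it. $Y_\infty$ (resp. $Y_{(\infty)}$) is the set of suprema (resp. infima) in $X$ of nonempty subsets of $Y$ (whenever they exist). *)

theory Defs
  imports "HOL-Analysis.Analysis" "HOL-Algebra.Ideal"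
begin

definition Spec :: "('r, 'm) ring_scheme \<Rightarrow> 'r set set" where
  "Spec R = {P. primeideal P R}"

definition zariski_topology :: "('r, 'm) ring_scheme \<Rightarrow> 'r set topology" where
  "zariski_topology R =
     topology_generated_by {{P \<in> Spec R. f \<notin> P} | f. f \<in> carrier R}"

definition spec_le :: "'a topology \<Rightarrow> 'a \<Rightarrow> 'a \<Rightarrow> bool" where
  "spec_le X x y \<longleftrightarrow> x \<in> topspace X \<and> y \<in> topspace X \<and> y \<in> X closure_of {x}"

definition spec_order_total :: "'a topology \<Rightarrow> bool" where
  "spec_order_total X \<longleftrightarrow> (\<forall>x\<in>topspace X. \<forall>y\<in>topspace X. spec_le X x y \<or> spec_le X y x)"

definition is_sup_in :: "'a topology \<Rightarrow> 'a set \<Rightarrow> 'a \<Rightarrow> bool" where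
  "is_sup_in X S s \<longleftrightarrow> s \<in> topspace X \<and> (\<forall>y\<in>S. spec_le X y s) \<and>
     (\<forall>z\<in>topspace X. (\<forall>y\<in>S. spec_le X y z) \<longrightarrow> spec_le X s z)"

definition is_inf_in :: "'a topology \<Rightarrow> 'a set \<Rightarrow> 'a \<Rightarrow> bool" where
  "is_inf_in X S s \<longleftrightarrow> s \<in> topspace X \<and> (\<forall>y\<in>S. spec_le X s y) \<and>
     (\<forall>z\<in>topspace X. (\<forall>y\<in>S. spec_le X z y) \<longrightarrow> spec_le X z s)"

text \<open>Y_\<infinity>: suprema in X of nonempty subsets of Y (when they exist).\<close>
definition sups_of :: "'a topology \<Rightarrow> 'a set \<Rightarrow> 'a set" where
  "sups_of X Y = {s. \<exists>S. S \<subseteq> Y \<and> S \<noteq> {} \<and> is_sup_in X S s}"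

text \<open>Y_(\<infinity>): infima in X of nonempty subsets of Y (when they exist).\<close>
definition infs_of :: "'a topology \<Rightarrow> 'a set \<Rightarrow> 'a set" where
  "infs_of X Y = {s. \<exists>S. S \<subseteq> Y \<and> S \<noteq> {} \<and> is_inf_in X S s}"

definition cons_topology :: "'a topology \<Rightarrow> 'a topology" where
  "cons_topology X = topology_generated_by
     ({U. openin X U \<and> compactin X U} \<union> {topspace X - U | U. openin X U \<and> compactin X U})"

end

theory Submission
  imports Defs "HOL-Algebra.Ring_Divisibility"
begin


lemma open_down: "openin X U \<Longrightarrow> spec_le X y z \<Longrightarrow> z \<in> U \<Longrightarrow> y \<in> U"
  unfolding spec_le_def in_closure_of by blast

lemma spec_le_refl: "x \<in> topspace X \<Longrightarrow> spec_le X x x"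
  unfolding spec_le_def using closure_of_subset[of "{x}" X] by auto

lemma spec_le_trans: "spec_le X x y \<Longrightarrow> spec_le X y z \<Longrightarrow> spec_le X x z"
  unfolding spec_le_def in_closure_of by blast

lemma spec_le_top: "spec_le X x y \<Longrightarrow> x \<in> topspace X \<and> y \<in> topspace X"
  unfolding spec_le_def by blast

lemma max_open_compact:
  assumes "openin X V" "m \<in> V" "\<forall>v\<in>V. spec_le X v m"
  shows "compactin X V"
  unfolding compactin_def
proof (intro conjI allI impI)
  show "V \<subseteq> topspace X" using assms openin_subset by auto
  fix U assume U: "(\<forall>x\<in>U. openin X x) \<and> V \<subseteq> \<Union> U"
  then obtain u where u: "u \<in> U" "m \<in> u" using assms by auto
  have "V \<subseteq> u" using open_down[of X u] U u assms by blast
  then show "\<exists>F. finite F \<and> F \<subseteq> U \<and> V \<subseteq> \<Union> F"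
    using u by (intro exI[of _ "{u}"]) auto
qed

lemma cons_open_iff:
  "openin (cons_topology X) U \<longleftrightarrow> generate_topology_on
     ({U. openin X U \<and> compactin X U} \<union> {topspace X - U | U. openin X U \<and> compactin X U}) U"
  unfolding cons_topology_def openin_topology_generated_by_iff by simp

lemma cons_topspace: "topspace (cons_topology X) = topspace X"
proof -
  have "topspace X \<in> {topspace X - U | U. openin X U \<and> compactin X U}"
    by (rule CollectI, rule exI[of _ "{}"]) auto
  then show ?thesis
    unfolding cons_topology_def topology_generated_by_topspace
    using openin_subset by blast
qed


definition cbasis :: "'a topology \<Rightarrow> 'a set set" where
  "cbasis X = {U. openin X U \<and> compactin X U} \<union> {topspace X - U | U. openin X U \<and> compactin X U}"

lemma cons_open_iff': "openin (cons_topology X) U \<longleftrightarrow> generate_topology_on (cbasis X) U"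
  unfolding cbasis_def cons_open_iff ..

lemma finite_chain_max:
  assumes tot: "spec_order_total X" and "finite T" "T \<noteq> {}" "T \<subseteq> topspace X"
  shows "\<exists>m\<in>T. \<forall>t\<in>T. spec_le X t m"
  using assms(2-4)
proof (induction T rule: finite_ne_induct)
  case (singleton x) then show ?case using spec_le_refl[of x X] by simp
next
  case (insert x F)
  then obtain m where m: "m \<in> F" "\<forall>t\<in>F. spec_le X t m" by auto
  have "spec_le X x m \<or> spec_le X m x" using tot insert m unfolding spec_order_total_def by auto
  then show ?case
  proof
    assume "spec_le X x m" then show ?thesis using m by auto
  next
    assume mx: "spec_le X m x"
    have "\<forall>t\<in>insert x F. spec_le X t x"
      using m(2) spec_le_trans[OF _ mx] spec_le_refl[of x X] insert.prems by auto
    then show ?thesis by blast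
  qed
qed

lemma compact_open_sup:
  assumes tot: "spec_order_total X"
    and V: "openin X V" "compactin X V" and S: "S \<subseteq> V" "S \<noteq> {}" and s: "is_sup_in X S s"
  shows "s \<in> V"
proof (rule ccontr)
  assume sV: "s \<notin> V"
  have Vt: "V \<subseteq> topspace X" using V openin_subset by auto
  have vlt: "\<exists>y\<in>S. \<not> spec_le X y v" if "v \<in> V" for v
  proof (rule ccontr)
    assume "\<not> ?thesis"
    then have "spec_le X s v" using s that Vt unfolding is_sup_in_def by blast
    then show False using open_down[OF V(1)] that sV by blast
  qed
  define U where "U = (\<lambda>y. topspace X - X closure_of {y}) ` S"
  have "\<forall>u\<in>U. openin X u" unfolding U_def by auto
  moreover have "V \<subseteq> \<Union>U"
  proof
    fix v assume "v \<in> V"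
    then obtain y where "y \<in> S" "\<not> spec_le X y v" using vlt by blast
    then show "v \<in> \<Union>U" using \<open>v \<in> V\<close> Vt S unfolding U_def spec_le_def by blast
  qed
  ultimately obtain F where F: "finite F" "F \<subseteq> U" "V \<subseteq> \<Union>F"
    using V(2) unfolding compactin_def by blast
  then obtain T where T: "T \<subseteq> S" "finite T" "F = (\<lambda>y. topspace X - X closure_of {y}) ` T"
    unfolding U_def using finite_subset_image[of F "\<lambda>y. topspace X - X closure_of {y}" S] by blast
  have "T \<noteq> {}" using T F S by auto
  then obtain m where m: "m \<in> T" "\<forall>t\<in>T. spec_le X t m"
    using finite_chain_max[OF tot T(2)] T S Vt by blast
  have "m \<in> V" using m T S by auto
  then have "m \<in> \<Union>F" using F by blast
  then obtain t where "t \<in> T" "m \<notin> X closure_of {t}" using T(3) by blast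
  then show False using m unfolding spec_le_def by auto
qed

lemma sup_in_cons_closure:
  assumes tot: "spec_order_total X" and Y: "Y \<subseteq> topspace X"
    and S: "S \<subseteq> Y" "S \<noteq> {}" and s: "is_sup_in X S s"
  shows "s \<in> cons_topology X closure_of Y"
proof -
  have st: "s \<in> topspace X" using s unfolding is_sup_in_def by auto
  have le: "\<And>z. z \<in> S \<Longrightarrow> spec_le X z s" using s unfolding is_sup_in_def by auto
  have key: "\<exists>y\<in>S. \<forall>z\<in>S. spec_le X y z \<longrightarrow> z \<in> U"
    if "generate_topology_on (cbasis X) U" "s \<in> U" for U
    using that
  proof (induction rule: generate_topology_on.induct)
    case Empty then show ?case by simp
  next
    case (Int a b)
    then obtain y1 y2 where y: "y1 \<in> S" "\<forall>z\<in>S. spec_le X y1 z \<longrightarrow> z \<in> a"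
      "y2 \<in> S" "\<forall>z\<in>S. spec_le X y2 z \<longrightarrow> z \<in> b" by auto
    have "spec_le X y1 y2 \<or> spec_le X y2 y1" using tot y S Y unfolding spec_order_total_def by blast
    then show ?case
    proof
      assume h: "spec_le X y1 y2"
      have "z \<in> a \<inter> b" if "z \<in> S" "spec_le X y2 z" for z
        using y(2)[rule_format, OF that(1) spec_le_trans[OF h that(2)]] y(4) that by blast
      then show ?case using y(3) by blast
    next
      assume h: "spec_le X y2 y1"
      have "z \<in> a \<inter> b" if "z \<in> S" "spec_le X y1 z" for z
        using y(4)[rule_format, OF that(1) spec_le_trans[OF h that(2)]] y(2) that by blast
      then show ?case using y(1) by blast
    qed
  next
    case (UN K)
    then obtain k where "k \<in> K" "s \<in> k" by auto
    then obtain y where "y \<in> S" "\<forall>z\<in>S. spec_le X y z \<longrightarrow> z \<in> k" using UN by blast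
    then show ?case using \<open>k \<in> K\<close> by blast
  next
    case (Basis V)
    then consider "openin X V" "compactin X V" | W where "V = topspace X - W" "openin X W" "compactin X W"
      unfolding cbasis_def by blast
    then show ?case
    proof cases
      case 1
      have "z \<in> V" if "z \<in> S" for z using open_down[OF 1(1) le[OF that]] Basis(2) .
      then show ?thesis using S(2) by blast
    next
      case 2
      then have "s \<notin> W" using Basis by auto
      then have "\<not> S \<subseteq> W" using compact_open_sup[OF tot 2(2,3) _ S(2) s] by blast
      then obtain y where y: "y \<in> S" "y \<notin> W" by auto
      have "z \<in> V" if "z \<in> S" "spec_le X y z" for z
      proof -
        have "z \<notin> W" using open_down[OF 2(2) that(2)] y(2) by blast
        moreover have "z \<in> topspace X" using that S Y by blast
        ultimately show ?thesis using 2(1) by blast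
      qed
      then show ?thesis using y by blast
    qed
  qed
  show ?thesis unfolding in_closure_of cons_topspace
  proof (intro conjI allI impI st)
    fix T assume h: "s \<in> T \<and> openin (cons_topology X) T"
    then have "generate_topology_on (cbasis X) T" by (simp add: cons_open_iff')
    from key[OF this conjunct1[OF h]] obtain y where y: "y \<in> S" "\<forall>z\<in>S. spec_le X y z \<longrightarrow> z \<in> T"
      by blast
    have yt: "y \<in> topspace X" using y(1) S Y by blast
    have "y \<in> T" using y(2)[rule_format, OF y(1) spec_le_refl[OF yt]] .
    then show "\<exists>y. y \<in> Y \<and> y \<in> T" using S y(1) by blast
  qed
qed

lemma inf_in_cons_closure:
  assumes tot: "spec_order_total X" and Y: "Y \<subseteq> topspace X"
    and H4: "\<And>C S i. closedin X C \<Longrightarrow> S \<subseteq> C \<Longrightarrow> S \<noteq> {} \<Longrightarrow> is_inf_in X S i \<Longrightarrow> i \<in> C"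
    and S: "S \<subseteq> Y" "S \<noteq> {}" and s: "is_inf_in X S s"
  shows "s \<in> cons_topology X closure_of Y"
proof -
  have st: "s \<in> topspace X" using s unfolding is_inf_in_def by auto
  have le: "\<And>z. z \<in> S \<Longrightarrow> spec_le X s z" using s unfolding is_inf_in_def by auto
  have key: "\<exists>y\<in>S. \<forall>z\<in>S. spec_le X z y \<longrightarrow> z \<in> U"
    if "generate_topology_on (cbasis X) U" "s \<in> U" for U
    using that
  proof (induction rule: generate_topology_on.induct)
    case Empty then show ?case by simp
  next
    case (Int a b)
    then obtain y1 y2 where y: "y1 \<in> S" "\<forall>z\<in>S. spec_le X z y1 \<longrightarrow> z \<in> a"
      "y2 \<in> S" "\<forall>z\<in>S. spec_le X z y2 \<longrightarrow> z \<in> b" by auto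
    have "spec_le X y1 y2 \<or> spec_le X y2 y1" using tot y S Y unfolding spec_order_total_def by blast
    then show ?case
    proof
      assume h: "spec_le X y2 y1"
      have "z \<in> a \<inter> b" if "z \<in> S" "spec_le X z y2" for z
        using y(2)[rule_format, OF that(1) spec_le_trans[OF that(2) h]] y(4) that by blast
      then show ?case using y(3) by blast
    next
      assume h: "spec_le X y1 y2"
      have "z \<in> a \<inter> b" if "z \<in> S" "spec_le X z y1" for z
        using y(4)[rule_format, OF that(1) spec_le_trans[OF that(2) h]] y(2) that by blast
      then show ?case using y(1) by blast
    qed
  next
    case (UN K)
    then obtain k where "k \<in> K" "s \<in> k" by auto
    then obtain y where "y \<in> S" "\<forall>z\<in>S. spec_le X z y \<longrightarrow> z \<in> k" using UN by blast
    then show ?case using \<open>k \<in> K\<close> by blast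
  next
    case (Basis V)
    then consider "openin X V" "compactin X V" | W where "V = topspace X - W" "openin X W" "compactin X W"
      unfolding cbasis_def by blast
    then show ?case
    proof cases
      case 1
      have "\<not> S \<subseteq> topspace X - V"
      proof
        assume "S \<subseteq> topspace X - V"
        then have "s \<in> topspace X - V" using H4[OF _ _ S(2) s] 1(1) by blast
        then show False using Basis by auto
      qed
      then obtain y where "y \<in> S" "y \<in> V" using S Y by blast
      then show ?thesis using open_down[OF 1(1)] by blast
    next
      case 2
      then have sW: "s \<notin> W" using Basis by auto
      have "z \<in> V" if "z \<in> S" for z
        using open_down[OF 2(2) le[OF that]] sW 2(1) that S Y by blast
      then show ?thesis using S by blast
    qed
  qed
  show ?thesis unfolding in_closure_of cons_topspace
  proof (intro conjI allI impI st)
    fix T assume h: "s \<in> T \<and> openin (cons_topology X) T"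
    then have "generate_topology_on (cbasis X) T" by (simp add: cons_open_iff')
    from key[OF this conjunct1[OF h]] obtain y where y: "y \<in> S" "\<forall>z\<in>S. spec_le X z y \<longrightarrow> z \<in> T"
      by blast
    have yt: "y \<in> topspace X" using y(1) S Y by blast
    have "y \<in> T" using y(2)[rule_format, OF y(1) spec_le_refl[OF yt]] .
    then show "\<exists>y. y \<in> Y \<and> y \<in> T" using S y(1) by blast
  qed
qed


lemma cbasis_compl_open:
  assumes "openin X V" "compactin X V"
  shows "openin (cons_topology X) (topspace X - V)"
  unfolding cons_open_iff'
  by (rule generate_topology_on.Basis) (use assms in \<open>auto simp: cbasis_def\<close>)

lemma cbasis_open:
  assumes "openin X V" "compactin X V"
  shows "openin (cons_topology X) V"
  unfolding cons_open_iff'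
  by (rule generate_topology_on.Basis) (use assms in \<open>auto simp: cbasis_def\<close>)

lemma cons_closure_sub:
  assumes tot: "spec_order_total X"
    and anti: "\<And>x y. spec_le X x y \<Longrightarrow> spec_le X y x \<Longrightarrow> x = y"
    and H3: "\<And>S. S \<subseteq> topspace X \<Longrightarrow> S \<noteq> {} \<Longrightarrow> (\<exists>s. is_sup_in X S s) \<and> (\<exists>s. is_inf_in X S s)"
    and H5: "\<And>x b. x \<in> topspace X \<Longrightarrow> b \<in> topspace X \<Longrightarrow> \<not> spec_le X b x \<Longrightarrow>
               \<exists>V. openin X V \<and> compactin X V \<and> x \<in> V \<and> b \<notin> V"
    and Y: "Y \<subseteq> topspace X" and x: "x \<in> cons_topology X closure_of Y"
  shows "x \<in> sups_of X Y \<union> infs_of X Y"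
proof (rule ccontr)
  assume nx: "x \<notin> sups_of X Y \<union> infs_of X Y"
  have xt: "x \<in> topspace X" using closure_of_subset_topspace[of "cons_topology X" Y] x cons_topspace[of X] by blast
  have ot: "openin (cons_topology X) (topspace X)"
    using openin_topspace[of "cons_topology X"] by (simp add: cons_topspace)
  define S1 where "S1 = {y\<in>Y. spec_le X y x}"
  define S2 where "S2 = {y\<in>Y. spec_le X x y}"
  have S1Y: "S1 \<subseteq> Y" and S2Y: "S2 \<subseteq> Y" unfolding S1_def S2_def by auto
  have W1: "\<exists>W. openin (cons_topology X) W \<and> x \<in> W \<and> W \<inter> S1 = {}"
  proof (cases "S1 = {}")
    case True
    then show ?thesis using xt ot by blast
  next
    case False
    have "S1 \<subseteq> topspace X" using Y S1Y by blast
    then obtain a where a: "is_sup_in X S1 a" using H3 False by blast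
    have "\<forall>y\<in>S1. spec_le X y x" unfolding S1_def by blast
    then have ax: "spec_le X a x" using a xt unfolding is_sup_in_def by blast
    have "a \<noteq> x"
    proof
      assume "a = x"
      then have "x \<in> sups_of X Y" using a False S1Y unfolding sups_of_def by blast
      then show False using nx by blast
    qed
    then have "\<not> spec_le X x a" using anti ax by blast
    moreover have at: "a \<in> topspace X" using a unfolding is_sup_in_def by blast
    ultimately obtain V where V: "openin X V" "compactin X V" "a \<in> V" "x \<notin> V"
      using H5[OF at xt] by blast
    have "y \<in> V" if "y \<in> S1" for y
    proof -
      have "spec_le X y a" using a that unfolding is_sup_in_def by blast
      then show ?thesis using open_down[OF V(1) _ V(3)] by blast
    qed
    then have "(topspace X - V) \<inter> S1 = {}" by blast
    moreover have "x \<in> topspace X - V" using xt V(4) by blast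
    ultimately show ?thesis using cbasis_compl_open[OF V(1,2)] by blast
  qed
  have W2: "\<exists>W. openin (cons_topology X) W \<and> x \<in> W \<and> W \<inter> S2 = {}"
  proof (cases "S2 = {}")
    case True
    then show ?thesis using xt ot by blast
  next
    case False
    have "S2 \<subseteq> topspace X" using Y S2Y by blast
    then obtain b where b: "is_inf_in X S2 b" using H3 False by blast
    have "\<forall>y\<in>S2. spec_le X x y" unfolding S2_def by blast
    then have xb: "spec_le X x b" using b xt unfolding is_inf_in_def by blast
    have "b \<noteq> x"
    proof
      assume "b = x"
      then have "x \<in> infs_of X Y" using b False S2Y unfolding infs_of_def by blast
      then show False using nx by blast
    qed
    then have "\<not> spec_le X b x" using anti xb by blast
    moreover have bt: "b \<in> topspace X" using b unfolding is_inf_in_def by blast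
    ultimately obtain V where V: "openin X V" "compactin X V" "x \<in> V" "b \<notin> V"
      using H5[OF xt bt] by blast
    have "y \<notin> V" if "y \<in> S2" for y
    proof
      assume "y \<in> V"
      moreover have "spec_le X b y" using b that unfolding is_inf_in_def by blast
      ultimately show False using open_down[OF V(1)] V(4) by blast
    qed
    then have "V \<inter> S2 = {}" by blast
    then show ?thesis using cbasis_open[OF V(1,2)] V(3) by blast
  qed
  obtain W1 where w1: "openin (cons_topology X) W1" "x \<in> W1" "W1 \<inter> S1 = {}" using W1 by blast
  obtain W2 where w2: "openin (cons_topology X) W2" "x \<in> W2" "W2 \<inter> S2 = {}" using W2 by blast
  have o: "openin (cons_topology X) (W1 \<inter> W2)" using w1(1) w2(1) by (rule openin_Int)
  have "x \<in> W1 \<inter> W2" using w1(2) w2(2) by blast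
  with o x have "\<exists>y. y \<in> Y \<and> y \<in> W1 \<inter> W2" unfolding in_closure_of by blast
  then obtain y where y: "y \<in> Y" "y \<in> W1 \<inter> W2" by blast
  have yt: "y \<in> topspace X" using y Y by blast
  have "spec_le X y x \<or> spec_le X x y" using tot yt xt unfolding spec_order_total_def by blast
  then show False
  proof
    assume "spec_le X y x" then have "y \<in> S1" using y unfolding S1_def by blast
    then show False using w1 y by blast
  next
    assume "spec_le X x y" then have "y \<in> S2" using y unfolding S2_def by blast
    then show False using w2 y by blast
  qed
qed

lemma abstract_main:
  assumes tot: "spec_order_total X"
    and anti: "\<And>x y. spec_le X x y \<Longrightarrow> spec_le X y x \<Longrightarrow> x = y"
    and H3: "\<And>S. S \<subseteq> topspace X \<Longrightarrow> S \<noteq> {} \<Longrightarrow> (\<exists>s. is_sup_in X S s) \<and> (\<exists>s. is_inf_in X S s)"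
    and H4: "\<And>C S i. closedin X C \<Longrightarrow> S \<subseteq> C \<Longrightarrow> S \<noteq> {} \<Longrightarrow> is_inf_in X S i \<Longrightarrow> i \<in> C"
    and H5: "\<And>x b. x \<in> topspace X \<Longrightarrow> b \<in> topspace X \<Longrightarrow> \<not> spec_le X b x \<Longrightarrow>
               \<exists>V. openin X V \<and> compactin X V \<and> x \<in> V \<and> b \<notin> V"
    and Y: "Y \<subseteq> topspace X"
  shows "cons_topology X closure_of Y = sups_of X Y \<union> infs_of X Y \<and>
         (closedin (cons_topology X) Y \<longleftrightarrow>
           (\<forall>S. S \<subseteq> Y \<and> S \<noteq> {} \<longrightarrow>
              (\<forall>s. is_sup_in X S s \<longrightarrow> s \<in> Y) \<and> (\<forall>s. is_inf_in X S s \<longrightarrow> s \<in> Y)))"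
proof -
  have eq: "cons_topology X closure_of Y = sups_of X Y \<union> infs_of X Y"
  proof
    show "cons_topology X closure_of Y \<subseteq> sups_of X Y \<union> infs_of X Y"
      using cons_closure_sub[OF tot anti H3 H5 Y] by blast
    show "sups_of X Y \<union> infs_of X Y \<subseteq> cons_topology X closure_of Y"
    proof
      fix s assume "s \<in> sups_of X Y \<union> infs_of X Y"
      then show "s \<in> cons_topology X closure_of Y"
      proof
        assume "s \<in> sups_of X Y"
        then obtain S where "S \<subseteq> Y" "S \<noteq> {}" "is_sup_in X S s" unfolding sups_of_def by blast
        then show ?thesis using sup_in_cons_closure[OF tot Y] by blast
      next
        assume "s \<in> infs_of X Y"
        then obtain S where S: "S \<subseteq> Y" "S \<noteq> {}" "is_inf_in X S s" unfolding infs_of_def by blast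
        show ?thesis by (rule inf_in_cons_closure[OF tot Y _ S(1) S(2) S(3)]) (fact H4)
      qed
    qed
  qed
  have Ysub: "Y \<subseteq> sups_of X Y"
  proof
    fix y assume y: "y \<in> Y"
    then have yt: "y \<in> topspace X" using Y by blast
    have "is_sup_in X {y} y" unfolding is_sup_in_def using yt spec_le_refl[OF yt] by blast
    then show "y \<in> sups_of X Y" unfolding sups_of_def using y by blast
  qed
  have "closedin (cons_topology X) Y \<longleftrightarrow> sups_of X Y \<union> infs_of X Y = Y"
    using eq closure_of_eq by metis
  also have "\<dots> \<longleftrightarrow> sups_of X Y \<union> infs_of X Y \<subseteq> Y" using Ysub by blast
  also have "\<dots> \<longleftrightarrow> (\<forall>S. S \<subseteq> Y \<and> S \<noteq> {} \<longrightarrow>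
              (\<forall>s. is_sup_in X S s \<longrightarrow> s \<in> Y) \<and> (\<forall>s. is_inf_in X S s \<longrightarrow> s \<in> Y))"
    unfolding sups_of_def infs_of_def by blast
  finally show ?thesis using eq by blast
qed



definition zbasis :: "('r, 'm) ring_scheme \<Rightarrow> 'r set set set" where
  "zbasis R = {{P \<in> Spec R. f \<notin> P} | f. f \<in> carrier R}"

lemma prime_sub: "P \<in> Spec R \<Longrightarrow> P \<subseteq> carrier R"
  unfolding Spec_def
  using primeideal.axioms(1) ideal.axioms(1) additive_subgroup.a_subset by blast

lemma prime_one: "P \<in> Spec R \<Longrightarrow> \<one>\<^bsub>R\<^esub> \<notin> P"
  unfolding Spec_def
  by (metis mem_Collect_eq primeideal.I_notcarr primeideal.axioms(1) ideal.one_imp_carrier)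

lemma z_open_iff: "openin (zariski_topology R) U \<longleftrightarrow> generate_topology_on (zbasis R) U"
  unfolding zariski_topology_def zbasis_def openin_topology_generated_by_iff ..

lemma z_topspace:
  assumes "cring R"
  shows "topspace (zariski_topology R) = Spec R"
proof -
  have one: "\<one>\<^bsub>R\<^esub> \<in> carrier R" using assms cring.axioms(1) ring.ring_simprules(6) by blast
  have "\<Union>(zbasis R) = Spec R"
  proof
    show "\<Union>(zbasis R) \<subseteq> Spec R" unfolding zbasis_def by blast
    show "Spec R \<subseteq> \<Union>(zbasis R)"
    proof
      fix P assume P: "P \<in> Spec R"
      have "P \<in> {P \<in> Spec R. \<one>\<^bsub>R\<^esub> \<notin> P}" using P prime_one by blast
      then show "P \<in> \<Union>(zbasis R)" unfolding zbasis_def using one by blast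
    qed
  qed
  then show ?thesis unfolding zariski_topology_def zbasis_def[symmetric] topology_generated_by_topspace .
qed

lemma z_open_down:
  assumes "generate_topology_on (zbasis R) T" "Q \<in> T" "P \<in> Spec R" "P \<subseteq> Q"
  shows "P \<in> T"
  using assms
proof (induction arbitrary: Q rule: generate_topology_on.induct)
  case Empty then show ?case by simp
next
  case (Int a b) then show ?case by blast
next
  case (UN K) then show ?case by blast
next
  case (Basis s)
  then obtain f where "s = {P \<in> Spec R. f \<notin> P}" unfolding zbasis_def by blast
  then show ?case using Basis by blast
qed

lemma z_le:
  assumes "cring R"
  shows "spec_le (zariski_topology R) P Q \<longleftrightarrow> P \<in> Spec R \<and> Q \<in> Spec R \<and> P \<subseteq> Q"
proof
  assume h: "spec_le (zariski_topology R) P Q"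
  then have PQ: "P \<in> Spec R" "Q \<in> Spec R" unfolding spec_le_def z_topspace[OF assms] by auto
  have "P \<subseteq> Q"
  proof
    fix f assume fP: "f \<in> P"
    show "f \<in> Q"
    proof (rule ccontr)
      assume fQ: "f \<notin> Q"
      have fc: "f \<in> carrier R" using fP prime_sub[OF PQ(1)] by blast
      let ?D = "{P \<in> Spec R. f \<notin> P}"
      have "openin (zariski_topology R) ?D"
        unfolding z_open_iff by (rule generate_topology_on.Basis) (use fc in \<open>auto simp: zbasis_def\<close>)
      moreover have "Q \<in> ?D" using PQ fQ by blast
      ultimately have "P \<in> ?D" using open_down h by metis
      then show False using fP by blast
    qed
  qed
  then show "P \<in> Spec R \<and> Q \<in> Spec R \<and> P \<subseteq> Q" using PQ by blast
next
  assume h: "P \<in> Spec R \<and> Q \<in> Spec R \<and> P \<subseteq> Q"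
  show "spec_le (zariski_topology R) P Q"
    unfolding spec_le_def in_closure_of z_topspace[OF assms]
  proof (intro conjI allI impI)
    fix T assume "Q \<in> T \<and> openin (zariski_topology R) T"
    then have "P \<in> T" using z_open_down[of R T Q P] h unfolding z_open_iff by blast
    then show "\<exists>y. y \<in> {P} \<and> y \<in> T" by blast
  qed (use h in auto)
qed


lemma z_chain:
  assumes "cring R" "spec_order_total (zariski_topology R)" "P \<in> Spec R" "Q \<in> Spec R"
  shows "P \<subseteq> Q \<or> Q \<subseteq> P"
proof -
  have "spec_le (zariski_topology R) P Q \<or> spec_le (zariski_topology R) Q P"
    using assms(2) assms(3,4) unfolding spec_order_total_def z_topspace[OF assms(1)] by blast
  then show ?thesis by (auto simp: z_le[OF assms(1)])
qed

lemma union_prime: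
  fixes R (structure)
  assumes R: "cring R" and S: "S \<subseteq> Spec R" "S \<noteq> {}"
    and ch: "\<forall>P\<in>S. \<forall>Q\<in>S. P \<subseteq> Q \<or> Q \<subseteq> P"
  shows "\<Union>S \<in> Spec R"
proof -
  interpret cring R by fact
  have "S \<subseteq> {I. ideal I R}" using S(1) primeideal.axioms(1) unfolding Spec_def by blast
  then have "subset.chain {I. ideal I R} S"
    using ch by (auto simp: pred_on.chain_def)
  then have id: "ideal (\<Union>S) R" using chain_Union_is_ideal[of S] S(2) by simp
  have "\<one> \<notin> \<Union>S" using prime_one S(1) by blast
  then have nc: "carrier R \<noteq> \<Union>S" using one_closed by blast
  show ?thesis unfolding Spec_def
  proof (rule CollectI, rule primeidealI[OF id R nc])
    fix a b assume ab: "a \<in> carrier R" "b \<in> carrier R" "a \<otimes> b \<in> \<Union>S"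
    then obtain P where P: "P \<in> S" "a \<otimes> b \<in> P" by (meson UnionE)
    then have pp: "primeideal P R" using S unfolding Spec_def by blast
    have "a \<in> P \<or> b \<in> P" by (rule primeideal.I_prime[OF pp ab(1,2) P(2)])
    then show "a \<in> \<Union>S \<or> b \<in> \<Union>S" using P by blast
  qed
qed

lemma inter_prime:
  fixes R (structure)
  assumes R: "cring R" and S: "S \<subseteq> Spec R" "S \<noteq> {}"
    and ch: "\<forall>P\<in>S. \<forall>Q\<in>S. P \<subseteq> Q \<or> Q \<subseteq> P"
  shows "\<Inter>S \<in> Spec R"
proof -
  interpret cring R by fact
  have id: "ideal (\<Inter>S) R"
    by (rule i_Intersect) (use S primeideal.axioms(1) in \<open>auto simp: Spec_def\<close>)
  have "\<one> \<notin> \<Inter>S" using prime_one S by blast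
  then have nc: "carrier R \<noteq> \<Inter>S" using one_closed by blast
  show ?thesis unfolding Spec_def
  proof (rule CollectI, rule primeidealI[OF id R nc])
    fix a b assume ab: "a \<in> carrier R" "b \<in> carrier R" "a \<otimes> b \<in> \<Inter>S"
    show "a \<in> \<Inter>S \<or> b \<in> \<Inter>S"
    proof (rule ccontr)
      assume "\<not> ?thesis"
      then obtain P1 P2 where P: "P1 \<in> S" "a \<notin> P1" "P2 \<in> S" "b \<notin> P2" by blast
      have pr: "primeideal P1 R" "primeideal P2 R" using S P unfolding Spec_def by auto
      have "P1 \<subseteq> P2 \<or> P2 \<subseteq> P1" using ch P by blast
      then show False
      proof
        assume "P1 \<subseteq> P2"
        then have "b \<notin> P1" using P by blast
        moreover have "a \<otimes> b \<in> P1" using ab P by blast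
        ultimately show False using primeideal.I_prime[OF pr(1) ab(1,2)] P(2) by blast
      next
        assume "P2 \<subseteq> P1"
        then have "a \<notin> P2" using P by blast
        moreover have "a \<otimes> b \<in> P2" using ab P by blast
        ultimately show False using primeideal.I_prime[OF pr(2) ab(1,2)] P(4) by blast
      qed
    qed
  qed
qed


lemma z_anti:
  assumes "cring R" "spec_le (zariski_topology R) x y" "spec_le (zariski_topology R) y x"
  shows "x = y"
  using assms(2,3) unfolding z_le[OF assms(1)] by blast

lemma z_H3:
  assumes R: "cring R" and tot: "spec_order_total (zariski_topology R)"
    and S: "S \<subseteq> topspace (zariski_topology R)" "S \<noteq> {}"
  shows "(\<exists>s. is_sup_in (zariski_topology R) S s) \<and> (\<exists>s. is_inf_in (zariski_topology R) S s)"
proof -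
  have SS: "S \<subseteq> Spec R" using S z_topspace[OF R] by blast
  have ch: "\<forall>P\<in>S. \<forall>Q\<in>S. P \<subseteq> Q \<or> Q \<subseteq> P" using z_chain[OF R tot] SS by blast
  have U: "\<Union>S \<in> Spec R" using union_prime[OF R SS S(2) ch] .
  have I: "\<Inter>S \<in> Spec R" using inter_prime[OF R SS S(2) ch] .
  have "is_sup_in (zariski_topology R) S (\<Union>S)"
    unfolding is_sup_in_def z_le[OF R] z_topspace[OF R] using U SS by blast
  moreover have "is_inf_in (zariski_topology R) S (\<Inter>S)"
    unfolding is_inf_in_def z_le[OF R] z_topspace[OF R] using I SS by blast
  ultimately show ?thesis by blast
qed

lemma z_inter_open:
  assumes R: "cring R" and tot: "spec_order_total (zariski_topology R)"
    and U: "generate_topology_on (zbasis R) U"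
  shows "S \<noteq> {} \<Longrightarrow> S \<subseteq> Spec R \<Longrightarrow> \<Inter>S \<in> U \<Longrightarrow> \<exists>P\<in>S. P \<in> U"
  using U
proof (induction arbitrary: S rule: generate_topology_on.induct)
  case Empty then show ?case by simp
next
  case (Int a b)
  have ia: "\<Inter>S \<in> a" and ib: "\<Inter>S \<in> b" using Int.prems(3) by auto
  obtain P1 where P1: "P1 \<in> S" "P1 \<in> a" using Int.IH(1)[OF Int.prems(1,2) ia] by blast
  obtain P2 where P2: "P2 \<in> S" "P2 \<in> b" using Int.IH(2)[OF Int.prems(1,2) ib] by blast
  note P = P1 P2
  have "P1 \<in> Spec R" "P2 \<in> Spec R" using P1(1) P2(1) Int.prems(2) by auto
  then have "P1 \<subseteq> P2 \<or> P2 \<subseteq> P1" using z_chain[OF R tot] by blast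
  then show ?case
  proof
    assume "P1 \<subseteq> P2"
    moreover have "P1 \<in> Spec R" using P1(1) Int.prems(2) by auto
    ultimately have "P1 \<in> b" using z_open_down[OF Int.hyps(2) P2(2)] by blast
    then show ?case using P by blast
  next
    assume "P2 \<subseteq> P1"
    moreover have "P2 \<in> Spec R" using P2(1) Int.prems(2) by auto
    ultimately have "P2 \<in> a" using z_open_down[OF Int.hyps(1) P1(2)] by blast
    then show ?case using P by blast
  qed
next
  case (UN K)
  then obtain k where k: "k \<in> K" "\<Inter>S \<in> k" by blast
  then obtain P where "P \<in> S" "P \<in> k" using UN.IH[OF k(1) UN.prems(1,2) k(2)] by blast
  then show ?case using k by blast
next
  case (Basis s)
  then obtain f where f: "s = {P \<in> Spec R. f \<notin> P}" unfolding zbasis_def by blast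
  then have "f \<notin> \<Inter>S" using Basis by blast
  then obtain P where "P \<in> S" "f \<notin> P" by blast
  then show ?case using f Basis.prems by blast
qed

lemma z_H4:
  assumes R: "cring R" and tot: "spec_order_total (zariski_topology R)"
    and C: "closedin (zariski_topology R) C" and S: "S \<subseteq> C" "S \<noteq> {}"
    and i: "is_inf_in (zariski_topology R) S i"
  shows "i \<in> C"
proof (rule ccontr)
  assume iC: "i \<notin> C"
  have Ct: "C \<subseteq> Spec R" using closedin_subset[OF C] z_topspace[OF R] by blast
  have SS: "S \<subseteq> Spec R" using S Ct by blast
  have ch: "\<forall>P\<in>S. \<forall>Q\<in>S. P \<subseteq> Q \<or> Q \<subseteq> P" using z_chain[OF R tot] SS by blast
  have I: "\<Inter>S \<in> Spec R" using inter_prime[OF R SS S(2) ch] .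
  have iS: "i \<in> Spec R" using i unfolding is_inf_in_def z_topspace[OF R] by blast
  have "\<forall>y\<in>S. spec_le (zariski_topology R) i y" using i unfolding is_inf_in_def by blast
  then have "\<forall>y\<in>S. i \<subseteq> y" unfolding z_le[OF R] by blast
  then have i1: "i \<subseteq> \<Inter>S" by blast
  have "\<forall>y\<in>S. spec_le (zariski_topology R) (\<Inter>S) y" unfolding z_le[OF R] using I SS by blast
  moreover have "\<Inter>S \<in> topspace (zariski_topology R)" using I z_topspace[OF R] by blast
  ultimately have "spec_le (zariski_topology R) (\<Inter>S) i" using i unfolding is_inf_in_def by blast
  then have "\<Inter>S \<subseteq> i" unfolding z_le[OF R] by blast
  with i1 have ieq: "i = \<Inter>S" by blast
  define U where "U = topspace (zariski_topology R) - C"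
  have "openin (zariski_topology R) U" using C unfolding U_def closedin_def by blast
  then have gU: "generate_topology_on (zbasis R) U" unfolding z_open_iff .
  have "\<Inter>S \<in> U" using iC iS ieq z_topspace[OF R] unfolding U_def by blast
  then obtain P where "P \<in> S" "P \<in> U" using z_inter_open[OF R tot gU S(2) SS] by blast
  then show False using S unfolding U_def by blast
qed

lemma z_H5:
  assumes R: "cring R" and tot: "spec_order_total (zariski_topology R)"
    and x: "x \<in> topspace (zariski_topology R)" and b: "b \<in> topspace (zariski_topology R)"
    and nb: "\<not> spec_le (zariski_topology R) b x"
  shows "\<exists>V. openin (zariski_topology R) V \<and> compactin (zariski_topology R) V \<and> x \<in> V \<and> b \<notin> V"
proof -
  have xS: "x \<in> Spec R" and bS: "b \<in> Spec R" using x b z_topspace[OF R] by auto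
  then have "\<not> b \<subseteq> x" using nb unfolding z_le[OF R] by blast
  then obtain f where f: "f \<in> b" "f \<notin> x" by blast
  have fc: "f \<in> carrier R" using f(1) prime_sub[OF bS] by blast
  define V where "V = {P \<in> Spec R. f \<notin> P}"
  have oV: "openin (zariski_topology R) V"
    unfolding z_open_iff V_def by (rule generate_topology_on.Basis) (use fc in \<open>auto simp: zbasis_def\<close>)
  have VS: "V \<subseteq> Spec R" "V \<noteq> {}" using xS f unfolding V_def by auto
  have ch: "\<forall>P\<in>V. \<forall>Q\<in>V. P \<subseteq> Q \<or> Q \<subseteq> P" using z_chain[OF R tot] VS by blast
  have mS: "\<Union>V \<in> Spec R" using union_prime[OF R VS ch] .
  have mV: "\<Union>V \<in> V" using mS unfolding V_def by blast
  have "\<forall>v\<in>V. spec_le (zariski_topology R) v (\<Union>V)" unfolding z_le[OF R] using VS mS by blast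
  then have "compactin (zariski_topology R) V" using max_open_compact[OF oV mV] by blast
  moreover have "x \<in> V" "b \<notin> V" using xS f unfolding V_def by auto
  ultimately show ?thesis using oV by blast
qed



lemma hm_le:
  assumes hm: "homeomorphic_map X W h" and x: "x \<in> topspace X" and y: "y \<in> topspace X"
  shows "spec_le X x y \<longleftrightarrow> spec_le W (h x) (h y)"
proof -
  have inj: "inj_on h (topspace X)" using homeomorphic_imp_injective_map[OF hm] .
  have surj: "h ` topspace X = topspace W" using homeomorphic_imp_surjective_map[OF hm] .
  have cl: "W closure_of {h x} = h ` (X closure_of {x})"
    using homeomorphic_map_closure_of[OF hm, of "{x}"] x by simp
  have sub: "X closure_of {x} \<subseteq> topspace X" by (rule closure_of_subset_topspace)
  have hx: "h x \<in> topspace W" "h y \<in> topspace W" using surj x y by auto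
  have "h y \<in> h ` (X closure_of {x}) \<longleftrightarrow> y \<in> X closure_of {x}"
    using inj_on_image_mem_iff[OF inj y sub] .
  then show ?thesis unfolding spec_le_def cl using x y hx by blast
qed

lemma hm_sup:
  assumes hm: "homeomorphic_map X W h" and S: "S \<subseteq> topspace X" and s: "s \<in> topspace X"
  shows "is_sup_in X S s \<longleftrightarrow> is_sup_in W (h ` S) (h s)"
proof -
  have surj: "h ` topspace X = topspace W" using homeomorphic_imp_surjective_map[OF hm] .
  have hs: "h s \<in> topspace W" using surj s by blast
  have A: "(\<forall>y\<in>S. spec_le X y s) \<longleftrightarrow> (\<forall>y\<in>h ` S. spec_le W y (h s))"
    using hm_le[OF hm _ s] S by blast
  have B: "(\<forall>y\<in>S. spec_le X y z) \<longleftrightarrow> (\<forall>y\<in>h ` S. spec_le W y (h z))" if "z \<in> topspace X" for z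
    using hm_le[OF hm _ that] S by blast
  have C: "spec_le X s z \<longleftrightarrow> spec_le W (h s) (h z)" if "z \<in> topspace X" for z
    using hm_le[OF hm s that] .
  have D: "(\<forall>z\<in>topspace X. (\<forall>y\<in>S. spec_le X y z) \<longrightarrow> spec_le X s z) \<longleftrightarrow>
        (\<forall>z\<in>topspace W. (\<forall>y\<in>h ` S. spec_le W y z) \<longrightarrow> spec_le W (h s) z)"
  proof
    assume L: "\<forall>z\<in>topspace X. (\<forall>y\<in>S. spec_le X y z) \<longrightarrow> spec_le X s z"
    show "\<forall>z\<in>topspace W. (\<forall>y\<in>h ` S. spec_le W y z) \<longrightarrow> spec_le W (h s) z"
    proof (intro ballI impI)
      fix z assume z: "z \<in> topspace W" "\<forall>y\<in>h ` S. spec_le W y z"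
      then obtain z0 where z0: "z0 \<in> topspace X" "z = h z0" using surj by blast
      then show "spec_le W (h s) z" using L B[OF z0(1)] C[OF z0(1)] z(2) by blast
    qed
  next
    assume R: "\<forall>z\<in>topspace W. (\<forall>y\<in>h ` S. spec_le W y z) \<longrightarrow> spec_le W (h s) z"
    show "\<forall>z\<in>topspace X. (\<forall>y\<in>S. spec_le X y z) \<longrightarrow> spec_le X s z"
    proof (intro ballI impI)
      fix z assume z: "z \<in> topspace X" "\<forall>y\<in>S. spec_le X y z"
      have hz: "h z \<in> topspace W" using surj z(1) by blast
      show "spec_le X s z" using R[rule_format, OF hz] B[OF z(1)] C[OF z(1)] z(2) by blast
    qed
  qed
  show ?thesis unfolding is_sup_in_def using A D s hs by blast
qed

lemma hm_inf:
  assumes hm: "homeomorphic_map X W h" and S: "S \<subseteq> topspace X" and s: "s \<in> topspace X"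
  shows "is_inf_in X S s \<longleftrightarrow> is_inf_in W (h ` S) (h s)"
proof -
  have surj: "h ` topspace X = topspace W" using homeomorphic_imp_surjective_map[OF hm] .
  have hs: "h s \<in> topspace W" using surj s by blast
  have A: "(\<forall>y\<in>S. spec_le X s y) \<longleftrightarrow> (\<forall>y\<in>h ` S. spec_le W (h s) y)"
    using hm_le[OF hm s] S by blast
  have B: "(\<forall>y\<in>S. spec_le X z y) \<longleftrightarrow> (\<forall>y\<in>h ` S. spec_le W (h z) y)" if "z \<in> topspace X" for z
    using hm_le[OF hm that] S by blast
  have C: "spec_le X z s \<longleftrightarrow> spec_le W (h z) (h s)" if "z \<in> topspace X" for z
    using hm_le[OF hm that s] .
  have D: "(\<forall>z\<in>topspace X. (\<forall>y\<in>S. spec_le X z y) \<longrightarrow> spec_le X z s) \<longleftrightarrow>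
        (\<forall>z\<in>topspace W. (\<forall>y\<in>h ` S. spec_le W z y) \<longrightarrow> spec_le W z (h s))"
  proof
    assume L: "\<forall>z\<in>topspace X. (\<forall>y\<in>S. spec_le X z y) \<longrightarrow> spec_le X z s"
    show "\<forall>z\<in>topspace W. (\<forall>y\<in>h ` S. spec_le W z y) \<longrightarrow> spec_le W z (h s)"
    proof (intro ballI impI)
      fix z assume z: "z \<in> topspace W" "\<forall>y\<in>h ` S. spec_le W z y"
      then obtain z0 where z0: "z0 \<in> topspace X" "z = h z0" using surj by blast
      then show "spec_le W z (h s)" using L B[OF z0(1)] C[OF z0(1)] z(2) by blast
    qed
  next
    assume R: "\<forall>z\<in>topspace W. (\<forall>y\<in>h ` S. spec_le W z y) \<longrightarrow> spec_le W z (h s)"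
    show "\<forall>z\<in>topspace X. (\<forall>y\<in>S. spec_le X z y) \<longrightarrow> spec_le X z s"
    proof (intro ballI impI)
      fix z assume z: "z \<in> topspace X" "\<forall>y\<in>S. spec_le X z y"
      have hz: "h z \<in> topspace W" using surj z(1) by blast
      show "spec_le X z s" using R[rule_format, OF hz] B[OF z(1)] C[OF z(1)] z(2) by blast
    qed
  qed
  show ?thesis unfolding is_inf_in_def using A D s hs by blast
qed

lemma transfer_total:
  assumes hm: "homeomorphic_map X W h" and tot: "spec_order_total X"
  shows "spec_order_total W"
  unfolding spec_order_total_def
proof (intro ballI)
  have surj: "h ` topspace X = topspace W" using homeomorphic_imp_surjective_map[OF hm] .
  fix x y assume "x \<in> topspace W" "y \<in> topspace W"
  then obtain x0 y0 where xy: "x0 \<in> topspace X" "y0 \<in> topspace X" "x = h x0" "y = h y0"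
    using surj by (metis imageE)
  then have "spec_le X x0 y0 \<or> spec_le X y0 x0" using tot unfolding spec_order_total_def by blast
  then show "spec_le W x y \<or> spec_le W y x" using hm_le[OF hm xy(1,2)] hm_le[OF hm xy(2,1)] xy(3,4) by blast
qed


lemma tr_anti:
  assumes hm: "homeomorphic_map X W h"
    and aW: "\<And>x y. spec_le W x y \<Longrightarrow> spec_le W y x \<Longrightarrow> x = y"
    and "spec_le X x y" "spec_le X y x"
  shows "x = y"
proof -
  have xy: "x \<in> topspace X" "y \<in> topspace X" using spec_le_top[OF assms(3)] by auto
  have "h x = h y" using aW assms(3,4) hm_le[OF hm xy(1,2)] hm_le[OF hm xy(2,1)] by blast
  then show ?thesis using homeomorphic_imp_injective_map[OF hm] xy by (meson inj_onD)
qed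

lemma tr_H3:
  assumes hm: "homeomorphic_map X W h"
    and H3: "\<And>S. S \<subseteq> topspace W \<Longrightarrow> S \<noteq> {} \<Longrightarrow> (\<exists>s. is_sup_in W S s) \<and> (\<exists>s. is_inf_in W S s)"
    and S: "S \<subseteq> topspace X" "S \<noteq> {}"
  shows "(\<exists>s. is_sup_in X S s) \<and> (\<exists>s. is_inf_in X S s)"
proof -
  have surj: "h ` topspace X = topspace W" using homeomorphic_imp_surjective_map[OF hm] .
  have hS1: "h ` S \<subseteq> topspace W" using S surj by blast
  have hS2: "h ` S \<noteq> {}" using S(2) by simp
  obtain s1 s2 where s: "is_sup_in W (h ` S) s1" "is_inf_in W (h ` S) s2" using H3[OF hS1 hS2] by blast
  have "s1 \<in> topspace W" using s(1) unfolding is_sup_in_def by blast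
  moreover have "s2 \<in> topspace W" using s(2) unfolding is_inf_in_def by blast
  ultimately obtain t1 t2 where t: "t1 \<in> topspace X" "s1 = h t1" "t2 \<in> topspace X" "s2 = h t2"
    using surj by (metis imageE)
  have "is_sup_in X S t1" using hm_sup[OF hm S(1) t(1)] s(1) t(2) by blast
  moreover have "is_inf_in X S t2" using hm_inf[OF hm S(1) t(3)] s(2) t(4) by blast
  ultimately show ?thesis by blast
qed

lemma tr_H4:
  assumes hm: "homeomorphic_map X W h"
    and H4: "\<And>C S i. closedin W C \<Longrightarrow> S \<subseteq> C \<Longrightarrow> S \<noteq> {} \<Longrightarrow> is_inf_in W S i \<Longrightarrow> i \<in> C"
    and C: "closedin X C" and S: "S \<subseteq> C" "S \<noteq> {}" and i: "is_inf_in X S i"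
  shows "i \<in> C"
proof -
  have Ct: "C \<subseteq> topspace X" using closedin_subset[OF C] .
  have cW: "closedin W (h ` C)" using homeomorphic_map_closedness[OF hm Ct] C by blast
  have it: "i \<in> topspace X" using i unfolding is_inf_in_def by blast
  have Ss: "S \<subseteq> topspace X" using S(1) Ct by blast
  have hi: "is_inf_in W (h ` S) (h i)" using hm_inf[OF hm Ss it] i by blast
  have hSC: "h ` S \<subseteq> h ` C" using S(1) by (rule image_mono)
  have hS2: "h ` S \<noteq> {}" using S(2) by simp
  have "h i \<in> h ` C" by (rule H4[OF cW hSC hS2 hi])
  then show ?thesis using inj_on_image_mem_iff[OF homeomorphic_imp_injective_map[OF hm] it Ct] by blast
qed

lemma tr_H5:
  assumes hm: "homeomorphic_map X W h"
    and H5: "\<And>x b. x \<in> topspace W \<Longrightarrow> b \<in> topspace W \<Longrightarrow> \<not> spec_le W b x \<Longrightarrow>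
               \<exists>V. openin W V \<and> compactin W V \<and> x \<in> V \<and> b \<notin> V"
    and x: "x \<in> topspace X" and b: "b \<in> topspace X" and nb: "\<not> spec_le X b x"
  shows "\<exists>V. openin X V \<and> compactin X V \<and> x \<in> V \<and> b \<notin> V"
proof -
  have surj: "h ` topspace X = topspace W" using homeomorphic_imp_surjective_map[OF hm] .
  have "\<not> spec_le W (h b) (h x)" using hm_le[OF hm b x] nb by blast
  moreover have "h x \<in> topspace W" "h b \<in> topspace W" using surj x b by auto
  ultimately obtain V' where V': "openin W V'" "compactin W V'" "h x \<in> V'" "h b \<notin> V'"
    using H5 by blast
  define V where "V = {z \<in> topspace X. h z \<in> V'}"
  have Vt: "V \<subseteq> topspace X" unfolding V_def by blast
  have "V' \<subseteq> topspace W" using openin_subset[OF V'(1)] .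
  have hV: "h ` V = V'"
  proof
    show "h ` V \<subseteq> V'" unfolding V_def by blast
    show "V' \<subseteq> h ` V"
    proof
      fix v assume v: "v \<in> V'"
      then have "v \<in> h ` topspace X" using surj \<open>V' \<subseteq> topspace W\<close> by blast
      then obtain z where z: "z \<in> topspace X" "v = h z" by blast
      then have "z \<in> V" unfolding V_def using v by blast
      then show "v \<in> h ` V" using z(2) by blast
    qed
  qed
  have "openin X V" using homeomorphic_map_openness_eq[OF hm, of V] Vt hV V'(1) by simp
  moreover have "compactin X V" using homeomorphic_map_compactness_eq[OF hm, of V] Vt hV V'(2) by simp
  moreover have "x \<in> V" "b \<notin> V" unfolding V_def using x V' by auto
  ultimately show ?thesis by blast
qed

theorem proposition3p3:
  fixes X :: "'a topology" and R :: "('r, 'm) ring_scheme" and Y :: "'a set"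
  assumes "cring R"
    and "X homeomorphic_space zariski_topology R"
    and "spec_order_total X"
    and "Y \<subseteq> topspace X"
  shows "cons_topology X closure_of Y = sups_of X Y \<union> infs_of X Y \<and>
         (closedin (cons_topology X) Y \<longleftrightarrow>
           (\<forall>S. S \<subseteq> Y \<and> S \<noteq> {} \<longrightarrow>
              (\<forall>s. is_sup_in X S s \<longrightarrow> s \<in> Y) \<and> (\<forall>s. is_inf_in X S s \<longrightarrow> s \<in> Y)))"
proof -
  obtain h where hm: "homeomorphic_map X (zariski_topology R) h"
    using assms(2) homeomorphic_space by blast
  have totW: "spec_order_total (zariski_topology R)" using transfer_total[OF hm assms(3)] .
  show ?thesis
    using abstract_main[OF assms(3)
          tr_anti[OF hm z_anti[OF assms(1)]]
          tr_H3[OF hm z_H3[OF assms(1) totW]]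
          tr_H4[OF hm z_H4[OF assms(1) totW]]
          tr_H5[OF hm z_H5[OF assms(1) totW]]
          assms(4)] .
qed

end
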